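(* Let $n,k$ be integers with $1<k<n-1$ and let $\mathcal{P}_{k,n}=\{x\in[0,1]^n:\sum_{i=1}^n x_i=k\}$ with vertex set $V$. There is no family of Bernstein polynomials $\{P_v\}_{v\in V}$ such that the Bernoulli race over $\{P_v\}_{v\in V}$ is a strong Bernoulli factory for $\mathcal{P}_{k,n}$.
   Context: A Bernstein monomial is $\prod_{i=1}^n x_i^{a_i}(1-x_i)^{b_i}$ with nonnegative integers $a_i,b_i$; a Bernstein polynomial is a finite combination $\sum_j c_jM_j(x)$ of Bernstein monomials with positive coefficients $c_j$. A Bernoulli factory with output set $V$ (for inputs $x\in[0,1]^n$) is a (possibly infinite) rooted binary tree whose internal nodes are labeled by an index $i\in[n]$ or a known constant $c\in(0,1)$ and whose leaves are labeled by elements of $V$; on input $x$ one walks from the root, at a node labeled $i$ flipping a fresh independent coin that is $1$ with probability $x_i$ (an $x_i$-coin), at a node labeled $c$ a fresh coin of bias $c$, following the edge labeled by the outcome, and outputs the label of the leaf reached. A strong Bernoulli factory for a polytope $\mathcal{P}$ with vertex set $V$ is such a factory with output set $V$ that terminates almost surely and satisfies $\mathbb{E}[\mathcal{F}(x)]=x$ for all $x\in\mathcal{P}$. The Bernoulli race over Bernstein polynomials $\{P_v\}_{v\in V}$ is the following factory: fix a constant $C\ge1$ at least the sum of the coefficients of every $P_v$. In each round, pick $v\in V$ uniformly at random; writing $P_v=\sum_j c_jM_j$, select monomial $M_j$ with probability $c_j/C$ (with the remaining probability select none, which counts as failure); if $M_j=\prod_i x_i^{a_i}(1-x_i)^{b_i}$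 is selected, flip the $x_i$-coin $a_i+b_i$ times for each $i$, and declare success iff for every $i$ the first $a_i$ flips are $1$ and the next $b_i$ flips are $0$. On success output $v$; otherwise start a new round. *)

theory Defs
  imports "HOL-Probability.Probability"
begin

text \<open>The polytope P_{k,n} inside [0,1]^n, with coordinates indexed by a finite type 'n
  (so n = CARD('n)), and its vertex set (extreme points).\<close>

definition hypersimplex :: "nat \<Rightarrow> (real ^ 'n) set" where
  "hypersimplex k = {x. (\<forall>i. 0 \<le> x $ i \<and> x $ i \<le> 1) \<and> (\<Sum>i\<in>UNIV. x $ i) = real k}"

definition hypersimplex_vertices :: "nat \<Rightarrow> (real ^ 'n) set" where
  "hypersimplex_vertices k = {v. v extreme_point_of (hypersimplex k)}"

text \<open>A Bernstein monomial prod_i x_i^(a_i) (1-x_i)^(b_i) is given by the exponent pair (a,b).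
  A Bernstein polynomial is a finite list of (coefficient, monomial) with positive coefficients.\<close>

type_synonym 'n bmono = "('n \<Rightarrow> nat) \<times> ('n \<Rightarrow> nat)"
type_synonym 'n bpoly = "(real \<times> 'n bmono) list"

definition bernstein_poly :: "'n bpoly \<Rightarrow> bool" where
  "bernstein_poly P \<longleftrightarrow> (\<forall>(c, m) \<in> set P. c > 0)"

definition coeff_sum :: "'n bpoly \<Rightarrow> real" where
  "coeff_sum P = (\<Sum>(c, m) \<leftarrow> P. c)"

fun coin_flips :: "real \<Rightarrow> nat \<Rightarrow> bool list pmf" where
  "coin_flips p 0 = return_pmf []"
| "coin_flips p (Suc m) =
     bind_pmf (bernoulli_pmf p) (\<lambda>b. bind_pmf (coin_flips p m) (\<lambda>bs. return_pmf (b # bs)))"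

definition monomial_test :: "real ^ 'n \<Rightarrow> 'n bmono \<Rightarrow> bool pmf" where
  "monomial_test x m =
     map_pmf (\<lambda>f. \<forall>i. f i = replicate (fst m i) True @ replicate (snd m i) False)
       (Pi_pmf UNIV [] (\<lambda>i. coin_flips (x $ i) (fst m i + snd m i)))"

definition select_monomial :: "'n bpoly \<Rightarrow> real \<Rightarrow> nat option pmf" where
  "select_monomial P C = embed_pmf (\<lambda>oj. case oj of
       None \<Rightarrow> 1 - coeff_sum P / C
     | Some j \<Rightarrow> (if j < length P then fst (P ! j) / C else 0))"

text \<open>One round of the Bernoulli race: Some v = success with output v, None = failure.\<close>

definition race_round ::
  "(real ^ 'n) set \<Rightarrow> (real ^ 'n \<Rightarrow> 'n bpoly) \<Rightarrow> real \<Rightarrow> real ^ 'n \<Rightarrow> (real ^ 'n) option pmf" where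
  "race_round V P C x =
     bind_pmf (pmf_of_set V) (\<lambda>v.
     bind_pmf (select_monomial (P v) C) (\<lambda>oj.
       case oj of
         None \<Rightarrow> return_pmf None
       | Some j \<Rightarrow> map_pmf (\<lambda>s. if s then Some v else None) (monomial_test x (snd (P v ! j)))))"

text \<open>Rounds are repeated independently until the first success; the probability that the race
  outputs v is sum_{r>=0} Pr[round fails]^r * Pr[round succeeds with v].\<close>

definition race_output_prob ::
  "(real ^ 'n) set \<Rightarrow> (real ^ 'n \<Rightarrow> 'n bpoly) \<Rightarrow> real \<Rightarrow> real ^ 'n \<Rightarrow> real ^ 'n \<Rightarrow> real" where
  "race_output_prob V P C x v =
     (\<Sum>r. pmf (race_round V P C x) None ^ r * pmf (race_round V P C x) (Some v))"

text \<open>Strong Bernoulli factory for the polytope with vertex set V: for every x in the polytope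
  the race terminates almost surely (total output probability 1) and E[F(x)] = x.\<close>

definition race_is_strong_factory ::
  "(real ^ 'n) set \<Rightarrow> (real ^ 'n) set \<Rightarrow> (real ^ 'n \<Rightarrow> 'n bpoly) \<Rightarrow> real \<Rightarrow> bool" where
  "race_is_strong_factory Q V P C \<longleftrightarrow>
     (\<forall>x \<in> Q.
        (\<Sum>v\<in>V. race_output_prob V P C x v) = 1 \<and>
        (\<Sum>v\<in>V. race_output_prob V P C x v *\<^sub>R v) = x)"

end

theory Submission
  imports Defs
begin


lemma pmf_coin_flips:
  assumes "0 \<le> p" "p \<le> 1"
  shows "pmf (coin_flips p m) l = (if length l = m then (\<Prod>b\<leftarrow>l. if b then p else 1 - p) else 0)"
proof (induction m arbitrary: l)
  case 0
  then show ?case by (cases l) auto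
next
  case (Suc m)
  have eq: "coin_flips p (Suc m) = bind_pmf (bernoulli_pmf p) (\<lambda>b. map_pmf ((#) b) (coin_flips p m))"
    by (simp add: map_pmf_def)
  have inner: "pmf (map_pmf ((#) b) (coin_flips p m)) l =
      (case l of [] \<Rightarrow> 0 | b' # l' \<Rightarrow> if b = b' then pmf (coin_flips p m) l' else 0)" for b
  proof (cases l)
    case Nil then show ?thesis by (auto intro!: pmf_map_outside)
  next
    case (Cons b' l')
    show ?thesis
    proof (cases "b = b'")
      case True then show ?thesis using Cons by (simp add: pmf_map_inj')
    next
      case False then show ?thesis using Cons by (auto intro!: pmf_map_outside)
    qed
  qed
  show ?case
    unfolding eq pmf_bind integral_bernoulli_pmf[OF assms] inner
    by (cases l) (auto simp: Suc)
qed

lemma pmf_coin_flips_rep: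
  assumes "0 \<le> p" "p \<le> 1"
  shows "pmf (coin_flips p (a + b)) (replicate a True @ replicate b False) = p ^ a * (1 - p) ^ b"
  using assms by (simp add: pmf_coin_flips prod_list_replicate)

definition eval_mono :: "real ^ 'n \<Rightarrow> 'n bmono \<Rightarrow> real" where
  "eval_mono x m = (\<Prod>i\<in>UNIV. (x$i) ^ (fst m i) * (1 - x$i) ^ (snd m i))"

lemma pmf_monomial_test:
  assumes "\<And>i. 0 \<le> x$i \<and> x$i \<le> 1"
  shows "pmf (monomial_test x m) True = eval_mono x m"
proof -
  let ?L = "\<lambda>i. replicate (fst m i) True @ replicate (snd m i) False"
  have "pmf (monomial_test x m) True =
     measure (Pi_pmf UNIV [] (\<lambda>i. coin_flips (x $ i) (fst m i + snd m i))) {?L}"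
    unfolding monomial_test_def pmf_map
    by (rule arg_cong[where f="measure _"]) (auto simp: fun_eq_iff)
  also have "\<dots> = pmf (Pi_pmf UNIV [] (\<lambda>i. coin_flips (x $ i) (fst m i + snd m i))) ?L"
    by (simp add: measure_pmf_single)
  also have "\<dots> = eval_mono x m"
    by (subst pmf_Pi') (auto simp: eval_mono_def pmf_coin_flips_rep assms)
  finally show ?thesis .
qed

definition eval_poly :: "real ^ 'n \<Rightarrow> 'n bpoly \<Rightarrow> real" where
  "eval_poly x P = (\<Sum>j<length P. fst (P!j) * eval_mono x (snd (P!j)))"

lemma coeff_sum_nth: "coeff_sum P = (\<Sum>j<length P. fst (P!j))"
  unfolding coeff_sum_def by (simp add: case_prod_beta sum_list_sum_nth atLeast0LessThan)

lemma pmf_select_monomial: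
  assumes "bernstein_poly P" "C \<ge> 1" "coeff_sum P \<le> C"
  shows "pmf (select_monomial P C) oj = (case oj of
       None \<Rightarrow> 1 - coeff_sum P / C
     | Some j \<Rightarrow> (if j < length P then fst (P ! j) / C else 0))"
  unfolding select_monomial_def
proof (rule pmf_embed_pmf)
  have pos: "j < length P \<Longrightarrow> fst (P!j) > 0" for j
    using assms(1) nth_mem[of j P] unfolding bernstein_poly_def by (auto simp: case_prod_beta)
  show "0 \<le> (case oj of None \<Rightarrow> 1 - coeff_sum P / C
     | Some j \<Rightarrow> (if j < length P then fst (P ! j) / C else 0))" for oj
    using assms pos by (cases oj) (auto simp: less_imp_le)
  let ?f = "\<lambda>oj. (case oj of None \<Rightarrow> 1 - coeff_sum P / C
     | Some j \<Rightarrow> (if j < length P then fst (P ! j) / C else 0))"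
  let ?A = "insert None (Some ` {..<length P})"
  have "(\<integral>\<^sup>+x. ennreal (?f x) \<partial>count_space UNIV) = (\<Sum>x\<in>?A. ennreal (?f x))"
    by (rule nn_integral_count_space') (auto split: option.splits)
  also have "\<dots> = ennreal (\<Sum>x\<in>?A. ?f x)"
    using assms pos by (intro sum_ennreal) (auto split: option.splits simp: less_imp_le)
  also have "(\<Sum>x\<in>?A. ?f x) = ?f None + (\<Sum>x\<in>Some ` {..<length P}. ?f x)"
    by (subst sum.insert) auto
  also have "(\<Sum>x\<in>Some ` {..<length P}. ?f x) = (\<Sum>j<length P. fst (P!j) / C)"
    by (subst sum.reindex) (auto simp: inj_on_def)
  also have "\<dots> = coeff_sum P / C"
    by (simp add: coeff_sum_nth sum_divide_distrib)
  finally show "(\<integral>\<^sup>+x. ennreal (?f x) \<partial>count_space UNIV) = 1" by simp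
qed

lemma pmf_race_round_Some:
  assumes V: "finite V" "V \<noteq> {}" "v \<in> V"
    and P: "\<And>v. v \<in> V \<Longrightarrow> bernstein_poly (P v)" "C \<ge> 1" "\<And>v. v \<in> V \<Longrightarrow> coeff_sum (P v) \<le> C"
    and x: "\<And>i. 0 \<le> x$i \<and> x$i \<le> 1"
  shows "pmf (race_round V P C x) (Some v) = eval_poly x (P v) / (C * card V)"
proof -
  have inner: "pmf (bind_pmf (select_monomial (P v') C) (\<lambda>oj.
       case oj of
         None \<Rightarrow> return_pmf None
       | Some j \<Rightarrow> map_pmf (\<lambda>s. if s then Some v' else None) (monomial_test x (snd (P v' ! j))))) (Some v)
     = (if v' = v then eval_poly x (P v) / C else 0)" if v': "v' \<in> V" for v'
  proof -
    let ?A = "insert None (Some ` {..<length (P v')})"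
    have h: "pmf (case oj of
         None \<Rightarrow> return_pmf None
       | Some j \<Rightarrow> map_pmf (\<lambda>s. if s then Some v' else None) (monomial_test x (snd (P v' ! j)))) (Some v)
       = (case oj of None \<Rightarrow> 0 | Some j \<Rightarrow> if v' = v then eval_mono x (snd (P v' ! j)) else 0)" for oj
    proof (cases oj)
      case None then show ?thesis by simp
    next
      case (Some j)
      have "pmf (map_pmf (\<lambda>s. if s then Some v' else None) (monomial_test x (snd (P v' ! j)))) (Some v)
          = measure (monomial_test x (snd (P v' ! j))) (if v' = v then {True} else {})"
        unfolding pmf_map by (rule arg_cong[where f="measure _"]) (auto split: if_splits)
      then show ?thesis using Some by (simp add: measure_pmf_single pmf_monomial_test x)
    qed
    have "pmf (bind_pmf (select_monomial (P v') C) (\<lambda>oj.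
       case oj of
         None \<Rightarrow> return_pmf None
       | Some j \<Rightarrow> map_pmf (\<lambda>s. if s then Some v' else None) (monomial_test x (snd (P v' ! j))))) (Some v)
      = (\<Sum>oj\<in>?A. pmf (select_monomial (P v') C) oj *\<^sub>R
           (case oj of None \<Rightarrow> 0 | Some j \<Rightarrow> if v' = v then eval_mono x (snd (P v' ! j)) else 0))"
      unfolding pmf_bind h
    proof (rule integral_measure_pmf)
      fix oj assume "oj \<in> set_pmf (select_monomial (P v') C)"
        "(case oj of None \<Rightarrow> 0 | Some j \<Rightarrow> if v' = v then eval_mono x (snd (P v' ! j)) else 0) \<noteq> (0::real)"
      then show "oj \<in> ?A"
        by (auto simp: set_pmf_iff pmf_select_monomial P v' split: option.splits if_splits)
    qed simp
    also have "\<dots> = (\<Sum>oj\<in>Some ` {..<length (P v')}. pmf (select_monomial (P v') C) oj *\<^sub>R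
           (case oj of None \<Rightarrow> 0 | Some j \<Rightarrow> if v' = v then eval_mono x (snd (P v' ! j)) else 0))"
      by (subst sum.insert) auto
    also have "\<dots> = (\<Sum>j<length (P v'). fst (P v' ! j) / C *
           (if v' = v then eval_mono x (snd (P v' ! j)) else 0))"
      by (subst sum.reindex) (auto simp: inj_on_def pmf_select_monomial P v')
    also have "\<dots> = (if v' = v then eval_poly x (P v) / C else 0)"
      by (auto simp: eval_poly_def sum_divide_distrib)
    finally show ?thesis .
  qed
  have "pmf (race_round V P C x) (Some v) = (\<Sum>v'\<in>V. (if v' = v then eval_poly x (P v) / C else 0)) / card V"
    unfolding race_round_def pmf_bind integral_pmf_of_set[OF V(2,1)]
    by (intro arg_cong[where f="\<lambda>t. t / _"] sum.cong refl) (rule inner[unfolded pmf_bind])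
  also have "\<dots> = eval_poly x (P v) / (C * card V)"
    using V by simp
  finally show ?thesis .
qed

lemma race_output_prob_eq:
  "race_output_prob V P C x v =
     pmf (race_round V P C x) (Some v) / (1 - pmf (race_round V P C x) None)"
proof -
  let ?R = "race_round V P C x"
  let ?q = "pmf ?R None" and ?s = "pmf ?R (Some v)"
  have "?q + ?s = measure ?R {None, Some v}"
    by (subst measure_measure_pmf_finite) auto
  also have "\<dots> \<le> 1" by (rule measure_pmf.prob_le_1)
  finally have le: "?q + ?s \<le> 1" .
  show ?thesis
  proof (cases "?q < 1")
    case True
    have "(\<lambda>r. ?q ^ r * ?s) sums (1 / (1 - ?q) * ?s)"
      by (rule sums_mult2, rule geometric_sums) (use True pmf_nonneg[of ?R None] in auto)
    then show ?thesis unfolding race_output_prob_def by (simp add: sums_unique[symmetric])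
  next
    case False
    then have "?s = 0" using le pmf_nonneg[of ?R "Some v"] by linarith
    then show ?thesis unfolding race_output_prob_def by simp
  qed
qed



lemma hyp_mem: "x \<in> hypersimplex k \<longleftrightarrow> (\<forall>i. 0 \<le> x $ i \<and> x $ i \<le> 1) \<and> (\<Sum>i\<in>UNIV. x $ i) = real k"
  by (simp add: hypersimplex_def)

lemma vertex_01:
  fixes v :: "real ^ 'n"
  assumes "v \<in> hypersimplex k" "\<forall>i. v$i = 0 \<or> v$i = 1"
  shows "v \<in> hypersimplex_vertices k"
  unfolding hypersimplex_vertices_def extreme_point_of_def
proof (intro CollectI conjI ballI assms(1))
  fix a b :: "real ^ 'n" assume a: "a \<in> hypersimplex k" and b: "b \<in> hypersimplex k"
  show "v \<notin> open_segment a b"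
  proof
    assume "v \<in> open_segment a b"
    then obtain u where ab: "a \<noteq> b" and u: "0 < u" "u < 1" and v: "v = (1 - u) *\<^sub>R a + u *\<^sub>R b"
      by (auto simp: in_segment)
    have "a $ i = b $ i" for i
    proof -
      have vi: "v $ i = (1 - u) * a $ i + u * b $ i" using v by simp
      have h: "0 \<le> a$i" "a$i \<le> 1" "0 \<le> b$i" "b$i \<le> 1" using a b by (auto simp: hyp_mem)
      have p1: "0 \<le> (1-u) * a$i" "0 \<le> u * b$i" "(1-u) * (1 - a$i) \<ge> 0" "u * (1 - b$i) \<ge> 0"
        using h u by auto
      consider "v$i = 0" | "v$i = 1" using assms(2) by blast
      then show ?thesis
      proof cases
        case 1
        then have "(1-u) * a$i = 0" "u * b$i = 0" using vi p1 by linarith+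
        then show ?thesis using u by simp
      next
        case 2
        then have "(1-u) * (1 - a$i) + u * (1 - b$i) = 0" using vi by (simp add: algebra_simps)
        then have "(1-u) * (1 - a$i) = 0" "u * (1 - b$i) = 0" using p1 by linarith+
        then show ?thesis using u by simp
      qed
    qed
    then show False using ab by (simp add: vec_eq_iff)
  qed
qed

lemma vertex_is_01:
  fixes v :: "real ^ 'n"
  assumes "v \<in> hypersimplex_vertices k"
  shows "v$i = 0 \<or> v$i = 1"
proof (rule ccontr)
  assume ni: "\<not> (v$i = 0 \<or> v$i = 1)"
  have vmem: "v \<in> hypersimplex k" and ext: "\<forall>a\<in>hypersimplex k. \<forall>b\<in>hypersimplex k. v \<notin> open_segment a b"
    using assms by (auto simp: hypersimplex_vertices_def extreme_point_of_def)
  have vb: "0 \<le> v$l \<and> v$l \<le> 1" for l using vmem by (simp add: hyp_mem)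
  have vi: "0 < v$i" "v$i < 1" using vb[of i] ni by auto
  have "\<exists>j. j \<noteq> i \<and> 0 < v$j \<and> v$j < 1"
  proof (rule ccontr)
    assume "\<not> ?thesis"
    then have o: "\<forall>j. j \<noteq> i \<longrightarrow> v$j = 0 \<or> v$j = 1"
      using vb by (metis order_less_le)
    have "(\<Sum>l\<in>UNIV-{i}. v$l) \<in> \<int>"
      by (rule Ints_sum) (use o in auto)
    moreover have "(\<Sum>l\<in>UNIV. v$l) = v$i + (\<Sum>l\<in>UNIV-{i}. v$l)"
      by (simp add: sum.remove)
    ultimately have "v$i \<in> \<int>" using vmem unfolding hyp_mem
      by (metis Ints_diff Ints_of_nat add_diff_cancel_right')
    then obtain m :: int where "v$i = of_int m" by (auto elim: Ints_cases)
    then show False using vi by auto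
  qed
  then obtain j where j: "j \<noteq> i" "0 < v$j" "v$j < 1" by blast
  define e where "e = min (min (v$i) (1 - v$i)) (min (v$j) (1 - v$j))"
  have e: "0 < e" "e \<le> v$i" "e \<le> 1 - v$i" "e \<le> v$j" "e \<le> 1 - v$j"
    using vi j by (auto simp: e_def)
  define d :: "real ^ 'n" where "d = (\<chi> l. (if l = i then e else 0) - (if l = j then e else 0))"
  have dsum: "(\<Sum>l\<in>UNIV. d$l) = 0"
    by (simp add: d_def sum_subtractf)
  have "v + d \<in> hypersimplex k" "v - d \<in> hypersimplex k"
    unfolding hyp_mem using vb e j dsum vmem
    by (auto simp: d_def sum.distrib sum_subtractf hyp_mem)
  moreover have "v + d \<noteq> v - d"
    using e j by (auto simp: vec_eq_iff d_def intro!: exI[of _ i])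
  moreover have "midpoint (v + d) (v - d) = v"
    by (simp add: midpoint_def vec_eq_iff)
  ultimately show False using ext midpoint_in_open_segment[of "v + d" "v - d"] by metis
qed

lemma vertices_iff:
  fixes v :: "real ^ 'n"
  shows "v \<in> hypersimplex_vertices k \<longleftrightarrow> v \<in> hypersimplex k \<and> (\<forall>i. v$i = 0 \<or> v$i = 1)"
  using vertex_01 vertex_is_01
  by (metis (no_types, lifting) extreme_point_of_def hypersimplex_vertices_def mem_Collect_eq)

lemma finite_vertices: "finite (hypersimplex_vertices k :: (real ^ 'n) set)"
proof (rule finite_subset)
  show "hypersimplex_vertices k \<subseteq> (\<lambda>f. \<chi> i. f i) ` (PiE (UNIV :: 'n set) (\<lambda>_. {0::real, 1}))"
  proof
    fix v :: "real ^ 'n" assume "v \<in> hypersimplex_vertices k"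
    then have "\<forall>i. v$i = 0 \<or> v$i = 1" using vertex_is_01 by blast
    then show "v \<in> (\<lambda>f. \<chi> i. f i) ` (PiE (UNIV :: 'n set) (\<lambda>_. {0::real, 1}))"
      by (intro image_eqI[of _ _ "\<lambda>i. v$i"]) auto
  qed
qed (auto intro!: finite_PiE)



lemma prod_split2:
  fixes f :: "'n::finite \<Rightarrow> real"
  assumes "i \<noteq> j"
  shows "prod f UNIV = f i * f j * prod f (UNIV - {i, j})"
proof -
  have "prod f UNIV = f i * prod f (UNIV - {i})" by (simp add: prod.remove)
  also have "prod f (UNIV - {i}) = f j * prod f (UNIV - {i} - {j})"
    using assms by (subst prod.remove[of _ j]) auto
  finally show ?thesis by (simp add: Diff_insert2[symmetric] insert_commute)
qed

lemma sum_split2: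
  fixes f :: "'n::finite \<Rightarrow> real"
  assumes "i \<noteq> j"
  shows "sum f UNIV = f i + f j + sum f (UNIV - {i, j})"
proof -
  have "sum f UNIV = f i + sum f (UNIV - {i})" by (simp add: sum.remove)
  also have "sum f (UNIV - {i}) = f j + sum f (UNIV - {i} - {j})"
    using assms by (subst sum.remove[of _ j]) auto
  finally show ?thesis by (simp add: Diff_insert2[symmetric] insert_commute)
qed

lemma mono_nonneg: "(\<And>l. 0 \<le> x$l \<and> x$l \<le> 1) \<Longrightarrow> 0 \<le> eval_mono x m"
  unfolding eval_mono_def by (intro prod_nonneg) auto

lemma mono_upper:
  assumes "i \<noteq> j" "\<And>l. 0 \<le> x$l \<and> x$l \<le> 1" "fst m i \<ge> 1" "snd m j \<ge> 1"
  shows "eval_mono x m \<le> x$i * (1 - x$j)"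
proof -
  let ?f = "\<lambda>l. (x$l) ^ (fst m l) * (1 - x$l) ^ (snd m l)"
  have f01: "0 \<le> ?f l \<and> ?f l \<le> 1" for l
    using assms(2)[of l] by (auto intro!: mult_le_one power_le_one)
  have "eval_mono x m = ?f i * ?f j * prod ?f (UNIV - {i, j})"
    unfolding eval_mono_def by (rule prod_split2[OF assms(1)])
  also have "\<dots> \<le> ?f i * ?f j * 1"
    using f01 by (intro mult_left_mono prod_le_1) auto
  also have "?f i \<le> x$i"
  proof -
    have "?f i \<le> (x$i) ^ (fst m i) * 1"
      using assms(2)[of i] by (intro mult_left_mono power_le_one) auto
    also have "\<dots> \<le> (x$i) ^ 1"
      using assms(2)[of i] assms(3) by (simp only: mult_1_right) (rule power_decreasing; simp)
    finally show ?thesis by simp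
  qed
  also have "?f j \<le> 1 - x$j"
  proof -
    have "?f j \<le> 1 * (1 - x$j) ^ (snd m j)"
      using assms(2)[of j] by (intro mult_right_mono power_le_one) auto
    also have "\<dots> \<le> (1 - x$j) ^ 1"
      using assms(2)[of j] assms(4) by (simp only: mult_1_left) (rule power_decreasing; simp)
    finally show ?thesis by simp
  qed
  finally show ?thesis
    using f01[of i] f01[of j] assms(2)[of i] assms(2)[of j]
    by (smt (verit, ccfv_SIG) mult_right_mono mult_left_mono mult_1_right)
qed

lemma mono_zero_face:
  assumes "\<And>l'. l' \<noteq> l \<Longrightarrow> 0 < x$l' \<and> x$l' < 1" "eval_mono x m = 0"
  shows "(x$l = 0 \<longrightarrow> fst m l \<noteq> 0) \<and> (x$l = 1 \<longrightarrow> snd m l \<noteq> 0)"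
proof -
  obtain l' where l': "(x$l') ^ (fst m l') * (1 - x$l') ^ (snd m l') = 0"
    using assms(2) unfolding eval_mono_def by (auto simp: prod_zero_iff)
  have "l' = l"
  proof (rule ccontr)
    assume "l' \<noteq> l"
    then have "0 < x$l'" "x$l' < 1" using assms(1) by auto
    then show False using l' by simp
  qed
  then show ?thesis using l' by auto
qed

lemma mono_along:
  fixes w x :: "real ^ 'n"
  assumes ij: "i \<noteq> j" and w01: "\<And>l. w$l = 0 \<or> w$l = 1" and wi: "w$i = 0" and wj: "w$j = 1"
    and xe: "\<And>l. l \<noteq> i \<Longrightarrow> l \<noteq> j \<Longrightarrow> x$l = w$l" and xi: "x$i = t" and xj: "x$j = 1 - t"
    and pos: "eval_mono w m \<noteq> 0"
  shows "eval_mono x m = (1 - t) ^ (snd m i + fst m j)"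
proof -
  let ?f = "\<lambda>x l. (x$l) ^ (fst m l) * (1 - x$l) ^ (snd m l)"
  have nz: "?f w l \<noteq> 0" for l
    using pos unfolding eval_mono_def by (auto simp: prod_zero_iff)
  have rest: "?f x l = 1" if "l \<in> UNIV - {i, j}" for l
  proof -
    have "?f x l = ?f w l" using that xe by auto
    also have "\<dots> = 1" using nz[of l] w01[of l] by auto
    finally show ?thesis .
  qed
  have "eval_mono x m = ?f x i * ?f x j * prod (?f x) (UNIV - {i, j})"
    unfolding eval_mono_def by (rule prod_split2[OF ij])
  also have "prod (?f x) (UNIV - {i, j}) = 1" using rest by (intro prod.neutral) auto
  also have "fst m i = 0" using nz[of i] wi by (auto simp: zero_power)
  also have "snd m j = 0" using nz[of j] wj by (auto simp: zero_power)
  finally show ?thesis using xi xj by (simp add: power_add)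
qed



theorem corollary7p2:
  fixes k :: nat
  assumes "1 < k" and "k + 1 < CARD('n::finite)"
  shows "\<not> (\<exists>(P :: real ^ 'n \<Rightarrow> 'n bpoly) (C :: real).
              (\<forall>v \<in> hypersimplex_vertices k. bernstein_poly (P v)) \<and>
              C \<ge> 1 \<and> (\<forall>v \<in> hypersimplex_vertices k. coeff_sum (P v) \<le> C) \<and>
              race_is_strong_factory (hypersimplex k) (hypersimplex_vertices k) P C)"
proof
  assume "\<exists>(P :: real ^ 'n \<Rightarrow> 'n bpoly) (C :: real).
              (\<forall>v \<in> hypersimplex_vertices k. bernstein_poly (P v)) \<and>
              C \<ge> 1 \<and> (\<forall>v \<in> hypersimplex_vertices k. coeff_sum (P v) \<le> C) \<and>
              race_is_strong_factory (hypersimplex k) (hypersimplex_vertices k) P C"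
  then obtain P :: "real ^ 'n \<Rightarrow> 'n bpoly" and C :: real where
    hP: "\<And>v. v \<in> hypersimplex_vertices k \<Longrightarrow> bernstein_poly (P v)" and hC: "C \<ge> 1"
    and hcs: "\<And>v. v \<in> hypersimplex_vertices k \<Longrightarrow> coeff_sum (P v) \<le> C"
    and hF: "race_is_strong_factory (hypersimplex k) (hypersimplex_vertices k) P C"
    by blast
  define V where "V = (hypersimplex_vertices k :: (real ^ 'n) set)"
  define Q where "Q = (hypersimplex k :: (real ^ 'n) set)"
  have finV: "finite V" unfolding V_def by (rule finite_vertices)
  have VQ: "V \<subseteq> Q" unfolding V_def Q_def using vertices_iff by blast
  have Qb: "x \<in> Q \<Longrightarrow> 0 \<le> x$l \<and> x$l \<le> 1" for x l by (simp add: Q_def hyp_mem)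
  have Qs: "x \<in> Q \<Longrightarrow> (\<Sum>l\<in>UNIV. x$l) = real k" for x by (simp add: Q_def hyp_mem)
  have V01: "v \<in> V \<Longrightarrow> v$l = 0 \<or> v$l = 1" for v l unfolding V_def using vertex_is_01 by blast
  define ind :: "'n set \<Rightarrow> real ^ 'n" where "ind S = (\<chi> l. if l \<in> S then 1 else 0)" for S
  have indV: "card S = k \<Longrightarrow> ind S \<in> V" for S
    unfolding V_def vertices_iff hyp_mem by (auto simp: ind_def sum.If_cases)
  obtain S :: "'n set" where S: "card S = k"
    using obtain_subset_with_card_n[of k "UNIV :: 'n set"] assms by force
  have "S \<noteq> {}" using S assms by auto
  then obtain i where i: "i \<in> S" by blast
  have "S \<noteq> UNIV" using S assms by auto
  then obtain j where j: "j \<notin> S" by blast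
  have ij: "i \<noteq> j" using i j by auto
  define u where "u = ind S"
  define w where "w = ind (insert j (S - {i}))"
  have uV: "u \<in> V" unfolding u_def using S by (intro indV) simp
  have wV: "w \<in> V" unfolding w_def using S i j assms by (intro indV) (simp add: card_insert_if)
  have Vne: "V \<noteq> {}" using uV by auto
  have cardV: "card V > 0" using finV Vne by auto
  have ui: "u$i = 1" and uj: "u$j = 0" and wi: "w$i = 0" and wj: "w$j = 1"
    using i j ij by (auto simp: u_def w_def ind_def)
  have uw: "l \<noteq> i \<Longrightarrow> l \<noteq> j \<Longrightarrow> w$l = u$l" for l by (auto simp: u_def w_def ind_def)
  define p where "p x v = race_output_prob V P C x v" for x v
  define D where "D x = 1 - pmf (race_round V P C x) None" for x
  have F1: "x \<in> Q \<Longrightarrow> (\<Sum>v\<in>V. p x v) = 1" for x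
    using hF unfolding race_is_strong_factory_def p_def V_def Q_def by blast
  have F2: "x \<in> Q \<Longrightarrow> (\<Sum>v\<in>V. p x v * v$l) = x$l" for x l
  proof -
    assume "x \<in> Q"
    then have "(\<Sum>v\<in>V. p x v *\<^sub>R v) = x"
      using hF unfolding race_is_strong_factory_def p_def V_def Q_def by blast
    then have "(\<Sum>v\<in>V. p x v *\<^sub>R v) $ l = x $ l" by simp
    then show ?thesis by simp
  qed
  have p_eq: "p x v = eval_poly x (P v) / (C * card V) / D x" if "x \<in> Q" "v \<in> V" for x v
    unfolding p_def D_def race_output_prob_eq
    by (subst pmf_race_round_Some[OF finV Vne that(2)])
       (use hP hC hcs Qb[OF that(1)] in \<open>auto simp: V_def\<close>)
  have D_nonneg: "D x \<ge> 0" for x unfolding D_def using pmf_le_1 by simp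
  have coef_pos: "v \<in> V \<Longrightarrow> jj < length (P v) \<Longrightarrow> fst (P v ! jj) > 0" for v jj
    using hP[of v] nth_mem[of jj "P v"] unfolding bernstein_poly_def V_def
    by (auto simp: case_prod_beta)
  have E_nonneg: "x \<in> Q \<Longrightarrow> v \<in> V \<Longrightarrow> eval_poly x (P v) \<ge> 0" for x v
    unfolding eval_poly_def using coef_pos Qb
    by (intro sum_nonneg mult_nonneg_nonneg mono_nonneg) (auto simp: less_imp_le)
  have p_nonneg: "x \<in> Q \<Longrightarrow> v \<in> V \<Longrightarrow> p x v \<ge> 0" for x v
    using p_eq E_nonneg D_nonneg hC by simp
  have Dpos: "x \<in> Q \<Longrightarrow> D x > 0" for x
  proof (rule ccontr)
    assume x: "x \<in> Q" and "\<not> D x > 0"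
    then have "D x = 0" using D_nonneg[of x] by simp
    then have "p x v = 0" if "v \<in> V" for v using p_eq[OF x that] by simp
    then show False using F1[OF x] by simp
  qed
  have agree: "v$l = x$l" if x: "x \<in> Q" and v: "v \<in> V" and xl: "x$l = 0 \<or> x$l = 1"
    and pv: "p x v \<noteq> 0" for x v l
  proof -
    have vQ: "v' \<in> V \<Longrightarrow> 0 \<le> v'$l \<and> v'$l \<le> 1" for v' using VQ Qb by blast
    from xl show ?thesis
    proof
      assume x0: "x$l = 0"
      have "(\<Sum>v'\<in>V. p x v' * v'$l) = 0" using F2[OF x] x0 by simp
      then have "p x v * v$l = 0"
        using sum_nonneg_eq_0_iff[OF finV, of "\<lambda>v'. p x v' * v'$l"] v p_nonneg[OF x] vQ
        by auto
      then show ?thesis using pv x0 by simp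
    next
      assume x1: "x$l = 1"
      have "(\<Sum>v'\<in>V. p x v' * (1 - v'$l)) = 0"
        using F2[OF x, of l] F1[OF x] x1 by (simp add: algebra_simps sum_subtractf)
      then have "p x v * (1 - v$l) = 0"
        using sum_nonneg_eq_0_iff[OF finV, of "\<lambda>v'. p x v' * (1 - v'$l)"] v p_nonneg[OF x] vQ
        by auto
      then show ?thesis using pv x1 by simp
    qed
  qed
  have mono_zero: "eval_mono x (snd (P v ! jj)) = 0"
    if x: "x \<in> Q" and v: "v \<in> V" and pv: "p x v = 0" and jj: "jj < length (P v)" for x v jj
  proof -
    have "eval_poly x (P v) = 0" using pv p_eq[OF x v] Dpos[OF x] hC cardV by simp
    then have "fst (P v ! jj) * eval_mono x (snd (P v ! jj)) = 0"
      unfolding eval_poly_def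
      using sum_nonneg_eq_0_iff[of "{..<length (P v)}" "\<lambda>jj. fst (P v ! jj) * eval_mono x (snd (P v ! jj))"]
        coef_pos[OF v] mono_nonneg[of x] Qb[OF x] jj
      by (auto simp: less_imp_le)
    then show ?thesis using coef_pos[OF v jj] by simp
  qed
  \<comment> \<open>Step 1: face points force divisibility of the monomials of P u\<close>
  define n where "n = CARD('n)"
  have n1: "real n - 1 > real k" using assms by (simp add: n_def)
  have cardi: "card (UNIV - {l}) = n - 1" for l :: 'n by (simp add: n_def card_Diff_singleton)
  have rn: "real (n - 1) = real n - 1" using n1 by (simp add: of_nat_diff)
  define y :: "real ^ 'n" where "y = (\<chi> l. if l = i then 0 else real k / (real n - 1))"
  have ky: "0 < real k / (real n - 1)" "real k / (real n - 1) < 1" using n1 assms by auto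
  have yQ: "y \<in> Q"
  proof -
    have "(\<Sum>l\<in>UNIV. y$l) = y$i + (\<Sum>l\<in>UNIV-{i}. y$l)" by (simp add: sum.remove)
    also have "(\<Sum>l\<in>UNIV-{i}. y$l) = (\<Sum>l\<in>UNIV-{i}. real k / (real n - 1))"
      by (rule sum.cong) (auto simp: y_def)
    also have "\<dots> = real k" using cardi[of i] rn n1 by simp
    finally show ?thesis unfolding Q_def hyp_mem using ky by (auto simp: y_def)
  qed
  define z :: "real ^ 'n" where "z = (\<chi> l. if l = j then 1 else (real k - 1) / (real n - 1))"
  have kz: "0 < (real k - 1) / (real n - 1)" "(real k - 1) / (real n - 1) < 1" using n1 assms by auto
  have zQ: "z \<in> Q"
  proof -
    have "(\<Sum>l\<in>UNIV. z$l) = z$j + (\<Sum>l\<in>UNIV-{j}. z$l)" by (simp add: sum.remove)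
    also have "(\<Sum>l\<in>UNIV-{j}. z$l) = (\<Sum>l\<in>UNIV-{j}. (real k - 1) / (real n - 1))"
      by (rule sum.cong) (auto simp: z_def)
    also have "\<dots> = real k - 1" using cardi[of j] rn n1 by simp
    finally show ?thesis unfolding Q_def hyp_mem using kz by (auto simp: z_def)
  qed
  have pyu: "p y u = 0" using agree[OF yQ uV, of i] ui by (auto simp: y_def)
  have pzu: "p z u = 0" using agree[OF zQ uV, of j] uj by (auto simp: z_def)
  have expo: "fst (snd (P u ! jj)) i \<ge> 1 \<and> snd (snd (P u ! jj)) j \<ge> 1" if jj: "jj < length (P u)" for jj
  proof -
    have "fst (snd (P u ! jj)) i \<noteq> 0"
      using mono_zero_face[of i y, OF _ mono_zero[OF yQ uV pyu jj]] ky by (auto simp: y_def)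
    moreover have "snd (snd (P u ! jj)) j \<noteq> 0"
      using mono_zero_face[of j z, OF _ mono_zero[OF zQ uV pzu jj]] kz by (auto simp: z_def)
    ultimately show ?thesis by auto
  qed
  have wQ: "w \<in> Q" using wV VQ by blast
  have "\<exists>v\<in>V. p w v \<noteq> 0"
  proof (rule ccontr)
    assume "\<not> ?thesis"
    then have "(\<Sum>v\<in>V. p w v) = 0" by simp
    then show False using F1[OF wQ] by simp
  qed
  then obtain v where v: "v \<in> V" "p w v \<noteq> 0" by blast
  have "v = w" using agree[OF wQ v(1) _ v(2)] V01[OF wV] by (auto simp: vec_eq_iff)
  then have "p w w \<noteq> 0" using v by simp
  then have "eval_poly w (P w) \<noteq> 0" using p_eq[OF wQ wV] by auto
  then obtain jj0 where jj0: "jj0 < length (P w)" "fst (P w ! jj0) * eval_mono w (snd (P w ! jj0)) \<noteq> 0"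
    unfolding eval_poly_def by (metis (no_types, lifting) lessThan_iff sum.neutral)
  define m0 where "m0 = snd (P w ! jj0)"
  define c0 where "c0 = fst (P w ! jj0)"
  define N where "N = snd m0 i + fst m0 j"
  have c0: "c0 > 0" using coef_pos[OF wV jj0(1)] by (simp add: c0_def)
  have m0: "eval_mono w m0 \<noteq> 0" using jj0(2) by (simp add: m0_def)
  have Cpos: "C > 0" using hC by simp
  define t where "t = c0 / (2 * (C + c0 * real N + c0))"
  have cN: "c0 * real N \<ge> 0" using c0 by simp
  have den: "C + c0 * real N + c0 > 0"
    using Cpos c0 cN by linarith
  have t0: "0 < t" unfolding t_def using c0 den by (intro divide_pos_pos) auto
  have t1: "t < 1"
  proof -
    have "c0 < 2 * (C + c0 * real N + c0)" using Cpos c0 cN by (smt (verit))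
    then show ?thesis using den by (simp add: t_def)
  qed
  define xt :: "real ^ 'n" where "xt = (\<chi> l. if l = i then t else if l = j then 1 - t else u$l)"
  have xti: "xt$i = t" and xtj: "xt$j = 1 - t" using ij by (auto simp: xt_def)
  have xtl: "l \<noteq> i \<Longrightarrow> l \<noteq> j \<Longrightarrow> xt$l = u$l" for l by (simp add: xt_def)
  have uQ: "u \<in> Q" using uV VQ by blast
  have xtQ: "xt \<in> Q"
  proof -
    have "(\<Sum>l\<in>UNIV. xt$l) = xt$i + xt$j + (\<Sum>l\<in>UNIV-{i,j}. xt$l)" by (rule sum_split2[OF ij])
    also have "(\<Sum>l\<in>UNIV-{i,j}. xt$l) = (\<Sum>l\<in>UNIV-{i,j}. u$l)"
      by (rule sum.cong) (auto simp: xtl)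
    also have "(\<Sum>l\<in>UNIV-{i,j}. u$l) = (\<Sum>l\<in>UNIV. u$l) - u$i - u$j"
      using sum_split2[OF ij, of "\<lambda>l. u$l"] by simp
    finally have "(\<Sum>l\<in>UNIV. xt$l) = real k" using Qs[OF uQ] xti xtj ui uj by simp
    moreover have "0 \<le> xt$l \<and> xt$l \<le> 1" for l
      using t0 t1 Qb[OF uQ, of l] by (auto simp: xt_def)
    ultimately show ?thesis unfolding Q_def hyp_mem by auto
  qed
  have supp: "v = u \<or> v = w" if v: "v \<in> V" "p xt v \<noteq> 0" for v
  proof -
    have vl: "v$l = u$l" if "l \<noteq> i" "l \<noteq> j" for l
      using agree[OF xtQ v(1) _ v(2), of l] V01[OF uV, of l] xtl[OF that] by auto
    have "(\<Sum>l\<in>UNIV. v$l) = v$i + v$j + (\<Sum>l\<in>UNIV-{i,j}. v$l)" by (rule sum_split2[OF ij])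
    also have "(\<Sum>l\<in>UNIV-{i,j}. v$l) = (\<Sum>l\<in>UNIV-{i,j}. u$l)"
      by (rule sum.cong) (auto simp: vl)
    also have "(\<Sum>l\<in>UNIV-{i,j}. u$l) = (\<Sum>l\<in>UNIV. u$l) - u$i - u$j"
      using sum_split2[OF ij, of "\<lambda>l. u$l"] by simp
    finally have "v$i + v$j = 1" using Qs[OF uQ] Qs[of v] VQ v(1) ui uj by auto
    then consider "v$i = 1" "v$j = 0" | "v$i = 0" "v$j = 1" using V01[OF v(1), of i] V01[OF v(1), of j] by auto
    then show ?thesis
    proof cases
      case 1 have "v = u"
      proof (subst vec_eq_iff, intro allI)
        fix l show "v$l = u$l" using vl[of l] ui uj 1 by (cases "l = i"; cases "l = j") auto
      qed
      then show ?thesis ..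
    next
      case 2 have "v = w"
      proof (subst vec_eq_iff, intro allI)
        fix l show "v$l = w$l" using vl[of l] uw[of l] wi wj 2 by (cases "l = i"; cases "l = j") auto
      qed
      then show ?thesis ..
    qed
  qed
  have pu: "p xt u = t"
  proof -
    have "(\<Sum>v\<in>V. p xt v * v$i) = p xt u * u$i + (\<Sum>v\<in>V-{u}. p xt v * v$i)"
      using finV uV by (simp add: sum.remove)
    also have "(\<Sum>v\<in>V-{u}. p xt v * v$i) = 0"
      using supp wi by (intro sum.neutral) fastforce
    finally show ?thesis using F2[OF xtQ, of i] xti ui by simp
  qed
  have pw: "p xt w = 1 - t"
  proof -
    have "(\<Sum>v\<in>V. p xt v * v$j) = p xt w * w$j + (\<Sum>v\<in>V-{w}. p xt v * v$j)"
      using finV wV by (simp add: sum.remove)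
    also have "(\<Sum>v\<in>V-{w}. p xt v * v$j) = 0"
      using supp uj by (intro sum.neutral) fastforce
    finally show ?thesis using F2[OF xtQ, of j] xtj wj by simp
  qed
  define K where "K = C * card V * D xt"
  have Kpos: "K > 0" using Cpos cardV Dpos[OF xtQ] by (simp add: K_def)
  have "eval_poly xt (P u) / K = t" using pu p_eq[OF xtQ uV] by (simp add: K_def divide_divide_eq_left)
  then have Eu: "eval_poly xt (P u) = t * K" using Kpos by (simp add: divide_eq_eq)
  have "eval_poly xt (P w) / K = 1 - t" using pw p_eq[OF xtQ wV] by (simp add: K_def divide_divide_eq_left)
  then have Ew: "eval_poly xt (P w) = (1 - t) * K" using Kpos by (simp add: divide_eq_eq)
  have Eu_le: "eval_poly xt (P u) \<le> C * (t * t)"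
  proof -
    have "eval_poly xt (P u) \<le> (\<Sum>jj<length (P u). fst (P u ! jj) * (t * t))"
      unfolding eval_poly_def
    proof (rule sum_mono)
      fix jj assume "jj \<in> {..<length (P u)}"
      then have jj: "jj < length (P u)" by simp
      have "eval_mono xt (snd (P u ! jj)) \<le> xt$i * (1 - xt$j)"
        using mono_upper[OF ij Qb[OF xtQ]] expo[OF jj] by blast
      then show "fst (P u ! jj) * eval_mono xt (snd (P u ! jj)) \<le> fst (P u ! jj) * (t * t)"
        using coef_pos[OF uV jj] xti xtj by (intro mult_left_mono) auto
    qed
    also have "\<dots> = coeff_sum (P u) * (t * t)" by (simp add: coeff_sum_nth sum_distrib_right)
    also have "\<dots> \<le> C * (t * t)" using hcs[of u] uV by (intro mult_right_mono) (auto simp: V_def)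
    finally show ?thesis .
  qed
  have Ew_ge: "eval_poly xt (P w) \<ge> c0 * (1 - t) ^ N"
  proof -
    have "eval_mono xt m0 = (1 - t) ^ N"
      unfolding N_def
      by (rule mono_along[OF ij _ wi wj _ xti xtj m0]) (use V01[OF wV] xtl uw in auto)
    then have "c0 * (1 - t) ^ N = fst (P w ! jj0) * eval_mono xt (snd (P w ! jj0))"
      by (simp add: c0_def m0_def)
    also have "\<dots> \<le> eval_poly xt (P w)"
      unfolding eval_poly_def
      using coef_pos[OF wV] mono_nonneg[OF Qb[OF xtQ]] jj0(1)
      by (intro member_le_sum) (auto simp: less_imp_le)
    finally show ?thesis .
  qed
  have "K \<le> C * t" using Eu Eu_le t0 by (simp add: mult_le_cancel_left_pos)
  then have "(1 - t) * K \<le> (1 - t) * (C * t)" using t1 by (intro mult_left_mono) auto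
  also have "\<dots> \<le> C * t" using t0 t1 Cpos by (simp add: algebra_simps)
  finally have A: "c0 * (1 - t) ^ N \<le> C * t" using Ew Ew_ge by simp
  have "1 + real N * (- t) \<le> (1 + - t) ^ N" by (rule Bernoulli_inequality) (use t1 in simp)
  then have "c0 * (1 - real N * t) \<le> c0 * (1 - t) ^ N" using c0 by (intro mult_left_mono) auto
  with A have B: "c0 \<le> t * (C + c0 * real N)" by (simp add: algebra_simps)
  have "t * (C + c0 * real N) < c0"
  proof -
    have "t * (C + c0 * real N) = c0 * (C + c0 * real N) / (2 * (C + c0 * real N + c0))"
      by (simp add: t_def)
    also have "\<dots> < c0"
      using c0 den by (simp add: divide_less_eq mult_less_cancel_left_pos)
    finally show ?thesis .
  qed
  with B show False by simp
qed

end
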